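(* Let $\Lambda$ be a row-finite $k$-graph with no sources. Suppose $\Lambda$ has no local periodicity at $u\in\Lambda^0$ and that $v\in\Lambda^0$ satisfies $v\le u$. Then $\Lambda$ has no local periodicity at $v$.
   Context: A $k$-graph is a countable category $\Lambda$ with a functor $d:\Lambda\to\mathbb{N}^k$ satisfying the factorization property: whenever $d(\lambda)=m+n$ there are unique $\mu,\nu$ with $\lambda=\mu\nu$, $d(\mu)=m$, $d(\nu)=n$. $\Lambda^n=d^{-1}(n)$, $\Lambda^0$ the vertices, $r,s$ range and source, $v\Lambda=\{\lambda: r(\lambda)=v\}$, $v\Lambda w=\{\lambda: r(\lambda)=v,s(\lambda)=w\}$. Row-finite: each $v\Lambda^n$ finite; no sources: $v\Lambda^{e_i}\ne\emptyset$ for all $v,i$. Write $v\le u$ iff $v\Lambda u\neq\emptyset$. For $0\le m\le n\le d(\lambda)$, $\lambda(m,n)$ is the unique path with $\lambda=\lambda'\lambda(m,n)\lambda''$, $d(\lambda')=m$, $d(\lambda(m,n))=n-m$. $\Lambda$ has no local periodicity at $v$ if for each $m\neq n\in\mathbb{N}^k$ there is $\lambda\in v\Lambda$ with $d(\lambda)\ge m\vee n$ and $\lambda(m,m+d(\lambda)-(m\vee n))\neq\lambda(n,n+d(\lambda)-(m\vee n))$ ($\vee$ = coordinatewise max). *)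

theory Defs
  imports Main "HOL-Library.Countable_Set"
begin

text \<open>Degrees in N^k are represented as functions nat => nat vanishing at indices >= k.
  A k-graph is a small countable category with object set V, morphism set Mor,
  source s, range r, identities ident, composition cmp (cmp f g = fg, defined when
  s f = r g) and a degree functor d.\<close>

definition is_deg :: "nat \<Rightarrow> (nat \<Rightarrow> nat) \<Rightarrow> bool" where
  "is_deg k m \<longleftrightarrow> (\<forall>i\<ge>k. m i = 0)"

definition dadd :: "(nat \<Rightarrow> nat) \<Rightarrow> (nat \<Rightarrow> nat) \<Rightarrow> nat \<Rightarrow> nat" where
  "dadd m n = (\<lambda>i. m i + n i)"

definition dsub :: "(nat \<Rightarrow> nat) \<Rightarrow> (nat \<Rightarrow> nat) \<Rightarrow> nat \<Rightarrow> nat" where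
  "dsub m n = (\<lambda>i. m i - n i)"

definition djoin :: "(nat \<Rightarrow> nat) \<Rightarrow> (nat \<Rightarrow> nat) \<Rightarrow> nat \<Rightarrow> nat" where
  "djoin m n = (\<lambda>i. max (m i) (n i))"

definition unitdeg :: "nat \<Rightarrow> nat \<Rightarrow> nat" where
  "unitdeg i = (\<lambda>j. if j = i then 1 else 0)"

definition is_category ::
  "'v set \<Rightarrow> 'a set \<Rightarrow> ('a \<Rightarrow> 'v) \<Rightarrow> ('a \<Rightarrow> 'v) \<Rightarrow> ('v \<Rightarrow> 'a) \<Rightarrow> ('a \<Rightarrow> 'a \<Rightarrow> 'a) \<Rightarrow> bool" where
  "is_category V Mor r s ident cmp \<longleftrightarrow>
     (\<forall>f\<in>Mor. r f \<in> V \<and> s f \<in> V) \<and>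
     (\<forall>v\<in>V. ident v \<in> Mor \<and> r (ident v) = v \<and> s (ident v) = v) \<and>
     (\<forall>f\<in>Mor. \<forall>g\<in>Mor. s f = r g \<longrightarrow>
        cmp f g \<in> Mor \<and> r (cmp f g) = r f \<and> s (cmp f g) = s g) \<and>
     (\<forall>f\<in>Mor. \<forall>g\<in>Mor. \<forall>h\<in>Mor. s f = r g \<longrightarrow> s g = r h \<longrightarrow>
        cmp (cmp f g) h = cmp f (cmp g h)) \<and>
     (\<forall>f\<in>Mor. cmp (ident (r f)) f = f \<and> cmp f (ident (s f)) = f)"

definition kgraph ::
  "nat \<Rightarrow> 'v set \<Rightarrow> 'a set \<Rightarrow> ('a \<Rightarrow> 'v) \<Rightarrow> ('a \<Rightarrow> 'v) \<Rightarrow> ('v \<Rightarrow> 'a) \<Rightarrow> ('a \<Rightarrow> 'a \<Rightarrow> 'a)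
     \<Rightarrow> ('a \<Rightarrow> nat \<Rightarrow> nat) \<Rightarrow> bool" where
  "kgraph k V Mor r s ident cmp d \<longleftrightarrow>
     is_category V Mor r s ident cmp \<and> countable V \<and> countable Mor \<and>
     (\<forall>f\<in>Mor. is_deg k (d f)) \<and>
     (\<forall>v\<in>V. d (ident v) = (\<lambda>i. 0)) \<and>
     (\<forall>f\<in>Mor. \<forall>g\<in>Mor. s f = r g \<longrightarrow> d (cmp f g) = dadd (d f) (d g)) \<and>
     (\<forall>l\<in>Mor. \<forall>m n. d l = dadd m n \<longrightarrow>
        (\<exists>!p. fst p \<in> Mor \<and> snd p \<in> Mor \<and> s (fst p) = r (snd p) \<and>
              l = cmp (fst p) (snd p) \<and> d (fst p) = m \<and> d (snd p) = n))"

definition row_finite :: "'v set \<Rightarrow> 'a set \<Rightarrow> ('a \<Rightarrow> 'v) \<Rightarrow> ('a \<Rightarrow> nat \<Rightarrow> nat) \<Rightarrow> bool" where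
  "row_finite V Mor r d \<longleftrightarrow> (\<forall>v\<in>V. \<forall>n. finite {l\<in>Mor. r l = v \<and> d l = n})"

definition no_sources :: "nat \<Rightarrow> 'v set \<Rightarrow> 'a set \<Rightarrow> ('a \<Rightarrow> 'v) \<Rightarrow> ('a \<Rightarrow> nat \<Rightarrow> nat) \<Rightarrow> bool" where
  "no_sources k V Mor r d \<longleftrightarrow> (\<forall>v\<in>V. \<forall>i<k. \<exists>l\<in>Mor. r l = v \<and> d l = unitdeg i)"

definition vle :: "'a set \<Rightarrow> ('a \<Rightarrow> 'v) \<Rightarrow> ('a \<Rightarrow> 'v) \<Rightarrow> 'v \<Rightarrow> 'v \<Rightarrow> bool" where
  "vle Mor r s v u \<longleftrightarrow> (\<exists>l\<in>Mor. r l = v \<and> s l = u)"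

definition seg ::
  "'a set \<Rightarrow> ('a \<Rightarrow> 'v) \<Rightarrow> ('a \<Rightarrow> 'v) \<Rightarrow> ('a \<Rightarrow> 'a \<Rightarrow> 'a) \<Rightarrow> ('a \<Rightarrow> nat \<Rightarrow> nat)
     \<Rightarrow> 'a \<Rightarrow> (nat \<Rightarrow> nat) \<Rightarrow> (nat \<Rightarrow> nat) \<Rightarrow> 'a" where
  "seg Mor r s cmp d l m n = (THE mu. \<exists>l1\<in>Mor. \<exists>l2\<in>Mor. mu \<in> Mor \<and>
      s l1 = r mu \<and> s mu = r l2 \<and> l = cmp (cmp l1 mu) l2 \<and>
      d l1 = m \<and> d mu = dsub n m)"

definition no_local_periodicity ::
  "nat \<Rightarrow> 'a set \<Rightarrow> ('a \<Rightarrow> 'v) \<Rightarrow> ('a \<Rightarrow> 'v) \<Rightarrow> ('a \<Rightarrow> 'a \<Rightarrow> 'a) \<Rightarrow> ('a \<Rightarrow> nat \<Rightarrow> nat)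
     \<Rightarrow> 'v \<Rightarrow> bool" where
  "no_local_periodicity k Mor r s cmp d v \<longleftrightarrow>
     (\<forall>m n. is_deg k m \<longrightarrow> is_deg k n \<longrightarrow> m \<noteq> n \<longrightarrow>
       (\<exists>l\<in>Mor. r l = v \<and> djoin m n \<le> d l \<and>
          seg Mor r s cmp d l m (dadd m (dsub (d l) (djoin m n)))
          \<noteq> seg Mor r s cmp d l n (dadd n (dsub (d l) (djoin m n)))))"

end

theory Submission
  imports Defs
begin

lemma kg_facts:
  assumes "kgraph k V Mor r s ident cmp d"
  shows kg_cmp: "\<And>f g. f \<in> Mor \<Longrightarrow> g \<in> Mor \<Longrightarrow> s f = r g \<Longrightarrow>
        cmp f g \<in> Mor \<and> r (cmp f g) = r f \<and> s (cmp f g) = s g"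
    and kg_assoc: "\<And>f g h. f\<in>Mor \<Longrightarrow> g\<in>Mor \<Longrightarrow> h\<in>Mor \<Longrightarrow> s f = r g \<Longrightarrow> s g = r h \<Longrightarrow>
        cmp (cmp f g) h = cmp f (cmp g h)"
    and kg_deg: "\<And>f g. f \<in> Mor \<Longrightarrow> g \<in> Mor \<Longrightarrow> s f = r g \<Longrightarrow> d (cmp f g) = dadd (d f) (d g)"
    and kg_fact: "\<And>l m n. l \<in> Mor \<Longrightarrow> d l = dadd m n \<Longrightarrow>
        (\<exists>!p. fst p \<in> Mor \<and> snd p \<in> Mor \<and> s (fst p) = r (snd p) \<and>
              l = cmp (fst p) (snd p) \<and> d (fst p) = m \<and> d (snd p) = n)"
  using assms unfolding kgraph_def is_category_def by blast+

lemma fact_unique: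
  assumes "kgraph k V Mor r s ident cmp d" "l \<in> Mor"
    and "f \<in> Mor" "g \<in> Mor" "s f = r g" "l = cmp f g"
    and "f' \<in> Mor" "g' \<in> Mor" "s f' = r g'" "l = cmp f' g'"
    and "d f' = d f" "d g' = d g"
  shows "f' = f \<and> g' = g"
proof -
  have dl: "d l = dadd (d f) (d g)" using kg_deg[OF assms(1)] assms by simp
  define P where "P = (\<lambda>p. fst p \<in> Mor \<and> snd p \<in> Mor \<and> s (fst p) = r (snd p) \<and>
              l = cmp (fst p) (snd p) \<and> d (fst p) = d f \<and> d (snd p) = d g)"
  have ex: "\<exists>!p. P p" unfolding P_def using kg_fact[OF assms(1) assms(2) dl] .
  have P1: "P (f, g)" unfolding P_def using assms by simp
  have P2: "P (f', g')" unfolding P_def using assms by simp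
  from ex obtain p0 where "\<forall>y. P y \<longrightarrow> y = p0" by blast
  then have "(f', g') = (f, g)" using P1 P2 by metis
  then show ?thesis by simp
qed

lemma dadd_dsub: "(a::nat\<Rightarrow>nat) \<le> b \<Longrightarrow> dadd a (dsub b a) = b"
  by (rule ext) (auto simp: dadd_def dsub_def le_fun_def)

lemma seg_char:
  assumes KG: "kgraph k V Mor r s ident cmp d"
    and h: "l1\<in>Mor" "x\<in>Mor" "l2\<in>Mor" "s l1 = r x" "s x = r l2" "l = cmp (cmp l1 x) l2"
      "d l1 = a" "d x = dsub b a" "a \<le> b"
  shows "seg Mor r s cmp d l a b = x"
  unfolding seg_def
proof (rule the_equality)
  show "\<exists>l1\<in>Mor. \<exists>l2\<in>Mor. x \<in> Mor \<and> s l1 = r x \<and> s x = r l2 \<and> l = cmp (cmp l1 x) l2 \<and> d l1 = a \<and> d x = dsub b a"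
    using h by blast
next
  fix mu assume "\<exists>l1'\<in>Mor. \<exists>l2'\<in>Mor. mu \<in> Mor \<and> s l1' = r mu \<and> s mu = r l2' \<and> l = cmp (cmp l1' mu) l2' \<and> d l1' = a \<and> d mu = dsub b a"
  then obtain l1' l2' where h': "l1'\<in>Mor" "l2'\<in>Mor" "mu \<in> Mor" "s l1' = r mu" "s mu = r l2'"
     "l = cmp (cmp l1' mu) l2'" "d l1' = a" "d mu = dsub b a" by blast
  have c1: "cmp l1 x \<in> Mor" "s (cmp l1 x) = r l2" using kg_cmp[OF KG] h by auto
  have c1': "cmp l1' mu \<in> Mor" "s (cmp l1' mu) = r l2'" using kg_cmp[OF KG] h' by auto
  have d1: "d (cmp l1 x) = b" using kg_deg[OF KG] h dadd_dsub by simp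
  have d1': "d (cmp l1' mu) = b" using kg_deg[OF KG] h' h dadd_dsub by simp
  have lM: "l \<in> Mor" using kg_cmp[OF KG] c1 h by auto
  have "d l = dadd b (d l2)" using kg_deg[OF KG] c1 h d1 by simp
  moreover have "d l = dadd b (d l2')" using kg_deg[OF KG] c1' h' d1' by simp
  ultimately have "dadd b (d l2') = dadd b (d l2)" by simp
  then have "d l2' = d l2" by (simp add: dadd_def fun_eq_iff)
  then have e: "cmp l1' mu = cmp l1 x"
    using fact_unique[OF KG lM c1(1) h(3) c1(2) h(6) c1'(1) h'(2) c1'(2) h'(6)] d1 d1' by simp
  show "mu = x"
    using fact_unique[OF KG c1(1) h(1) h(2) h(4) refl h'(1) h'(3) h'(4) e[symmetric]] h h' by simp
qed

lemma seg_exists: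
  assumes KG: "kgraph k V Mor r s ident cmp d" and "l \<in> Mor" "a \<le> b" "b \<le> d l"
  shows "\<exists>l1 x l2. l1\<in>Mor \<and> x\<in>Mor \<and> l2\<in>Mor \<and> s l1 = r x \<and> s x = r l2 \<and>
     l = cmp (cmp l1 x) l2 \<and> d l1 = a \<and> d x = dsub b a"
proof -
  have "d l = dadd b (dsub (d l) b)" using dadd_dsub assms by simp
  from ex1_implies_ex[OF kg_fact[OF KG assms(2) this]] obtain p where
    p: "fst p \<in> Mor" "snd p \<in> Mor" "s (fst p) = r (snd p)" "l = cmp (fst p) (snd p)" "d (fst p) = b"
    by blast
  have "d (fst p) = dadd a (dsub b a)" using p dadd_dsub assms by simp
  from ex1_implies_ex[OF kg_fact[OF KG p(1) this]] obtain q where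
    q: "fst q \<in> Mor" "snd q \<in> Mor" "s (fst q) = r (snd q)" "fst p = cmp (fst q) (snd q)"
      "d (fst q) = a" "d (snd q) = dsub b a" by blast
  have "s (snd q) = r (snd p)" using q p kg_cmp[OF KG q(1,2,3)] by metis
  then show ?thesis using p q by metis
qed

lemma seg_cmp:
  assumes KG: "kgraph k V Mor r s ident cmp d" and "mu \<in> Mor" "l \<in> Mor" "s mu = r l"
    "a \<le> b" "b \<le> d l"
  shows "seg Mor r s cmp d (cmp mu l) (dadd (d mu) a) (dadd (d mu) b) = seg Mor r s cmp d l a b"
proof -
  obtain l1 x l2 where h: "l1\<in>Mor" "x\<in>Mor" "l2\<in>Mor" "s l1 = r x" "s x = r l2"
     "l = cmp (cmp l1 x) l2" "d l1 = a" "d x = dsub b a"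
    using seg_exists[OF KG assms(3,5,6)] by blast
  have sx: "seg Mor r s cmp d l a b = x" using seg_char[OF KG h assms(5)] .
  have c1: "cmp l1 x \<in> Mor" "s (cmp l1 x) = r l2" "r (cmp l1 x) = r l1" using kg_cmp[OF KG] h by auto
  have rl: "r l = r l1" using kg_cmp[OF KG c1(1) h(3) c1(2)] h c1 by simp
  have ml1: "cmp mu l1 \<in> Mor" "s (cmp mu l1) = r x" using kg_cmp[OF KG assms(2) h(1)] rl assms h by auto
  have "cmp mu l = cmp (cmp mu (cmp l1 x)) l2"
    using kg_assoc[OF KG assms(2) c1(1) h(3)] h c1 rl assms by simp
  also have "cmp mu (cmp l1 x) = cmp (cmp mu l1) x"
    using kg_assoc[OF KG assms(2) h(1) h(2)] h rl assms by simp
  finally have e: "cmp mu l = cmp (cmp (cmp mu l1) x) l2" .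
  have dm: "d (cmp mu l1) = dadd (d mu) a" using kg_deg[OF KG assms(2) h(1)] rl assms h by simp
  have dx: "d x = dsub (dadd (d mu) b) (dadd (d mu) a)" using h(8) by (auto simp: dadd_def dsub_def)
  have le: "dadd (d mu) a \<le> dadd (d mu) b" using assms(5) by (auto simp: dadd_def le_fun_def)
  show ?thesis using seg_char[OF KG ml1(1) h(2) h(3) ml1(2) h(5) e dm dx le] sx by simp
qed

lemma seg_seg:
  assumes KG: "kgraph k V Mor r s ident cmp d" and "l \<in> Mor" "a \<le> b" "b \<le> d l"
    "c \<le> e" "e \<le> dsub b a"
  shows "seg Mor r s cmp d (seg Mor r s cmp d l a b) c e = seg Mor r s cmp d l (dadd a c) (dadd a e)"
proof -
  obtain l1 x l2 where h: "l1\<in>Mor" "x\<in>Mor" "l2\<in>Mor" "s l1 = r x" "s x = r l2"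
     "l = cmp (cmp l1 x) l2" "d l1 = a" "d x = dsub b a"
    using seg_exists[OF KG assms(2,3,4)] by blast
  have sx: "seg Mor r s cmp d l a b = x" using seg_char[OF KG h assms(3)] .
  obtain y1 z y2 where g: "y1\<in>Mor" "z\<in>Mor" "y2\<in>Mor" "s y1 = r z" "s z = r y2"
     "x = cmp (cmp y1 z) y2" "d y1 = c" "d z = dsub e c"
    using seg_exists[OF KG h(2) assms(5)] assms(6) h(8) by metis
  have sz: "seg Mor r s cmp d x c e = z" using seg_char[OF KG g assms(5)] .
  have g1: "cmp y1 z \<in> Mor" "r (cmp y1 z) = r y1" "s (cmp y1 z) = s z" using kg_cmp[OF KG] g by auto
  have rx: "r x = r y1" "s x = s y2" using kg_cmp[OF KG g1(1) g(3)] g g1 by auto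
  have l1y1: "cmp l1 y1 \<in> Mor" "s (cmp l1 y1) = r z" "d (cmp l1 y1) = dadd a c"
    using kg_cmp[OF KG h(1) g(1)] kg_deg[OF KG h(1) g(1)] h g rx by auto
  have y2l2: "cmp y2 l2 \<in> Mor" "r (cmp y2 l2) = r y2"
    using kg_cmp[OF KG g(3) h(3)] h rx by auto
  have "cmp l1 x = cmp (cmp l1 (cmp y1 z)) y2"
    using kg_assoc[OF KG h(1) g1(1) g(3)] g g1 h rx by simp
  also have "cmp l1 (cmp y1 z) = cmp (cmp l1 y1) z"
    using kg_assoc[OF KG h(1) g(1) g(2)] g h rx by simp
  finally have e1: "cmp l1 x = cmp (cmp (cmp l1 y1) z) y2" .
  have lz: "cmp (cmp l1 y1) z \<in> Mor" "s (cmp (cmp l1 y1) z) = r y2"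
    using kg_cmp[OF KG l1y1(1) g(2) l1y1(2)] g by auto
  have e2: "l = cmp (cmp (cmp l1 y1) z) (cmp y2 l2)"
    using kg_assoc[OF KG lz(1) g(3) h(3)] e1 h rx lz by simp
  have dz: "d z = dsub (dadd a e) (dadd a c)" using g(8) by (auto simp: dadd_def dsub_def)
  have le: "dadd a c \<le> dadd a e" using assms(5) by (auto simp: dadd_def le_fun_def)
  show ?thesis using seg_char[OF KG l1y1(1) g(2) y2l2(1) l1y1(2) _ e2 l1y1(3) dz le] g y2l2 sx sz by simp
qed

theorem lemma3p6:
  fixes k :: nat and V :: "'v set" and Mor :: "'a set"
    and r s :: "'a \<Rightarrow> 'v" and ident :: "'v \<Rightarrow> 'a" and cmp :: "'a \<Rightarrow> 'a \<Rightarrow> 'a"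
    and d :: "'a \<Rightarrow> nat \<Rightarrow> nat" and u v :: 'v
  assumes "kgraph k V Mor r s ident cmp d"
    and "row_finite V Mor r d"
    and "no_sources k V Mor r d"
    and "u \<in> V" and "v \<in> V"
    and "no_local_periodicity k Mor r s cmp d u"
    and "vle Mor r s v u"
  shows "no_local_periodicity k Mor r s cmp d v"
  unfolding no_local_periodicity_def
proof (intro allI impI)
  note KG = assms(1)
  fix m n :: "nat \<Rightarrow> nat"
  assume dm: "is_deg k m" and dn: "is_deg k n" and mn: "m \<noteq> n"
  define J where "J = djoin m n"
  obtain lam where lam: "lam \<in> Mor" "r lam = u" "J \<le> d lam"
    "seg Mor r s cmp d lam m (dadd m (dsub (d lam) J)) \<noteq> seg Mor r s cmp d lam n (dadd n (dsub (d lam) J))"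
    using assms(6) dm dn mn unfolding no_local_periodicity_def J_def by blast
  obtain mu where mu: "mu \<in> Mor" "r mu = v" "s mu = u" using assms(7) unfolding vle_def by blast
  define l where "l = cmp mu lam"
  define t where "t = dsub (d lam) J"
  have lM: "l \<in> Mor" "r l = v" using kg_cmp[OF KG mu(1) lam(1)] mu lam l_def by auto
  have dl: "d l = dadd (d mu) (d lam)" using kg_deg[OF KG mu(1) lam(1)] mu lam l_def by auto
  have mJ: "m \<le> J" "n \<le> J" unfolding J_def djoin_def le_fun_def by auto
  have Jl: "J \<le> d l" using lam(3) dl by (auto simp: dadd_def le_fun_def intro: trans_le_add2)
  have T: "dsub (d l) J = dadd (d mu) t" using lam(3) dl unfolding t_def
    by (auto simp: dadd_def dsub_def le_fun_def)
  have key: "seg Mor r s cmp d (seg Mor r s cmp d l q (dadd q (dsub (d l) J))) (d mu) (dadd (d mu) t)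
       = seg Mor r s cmp d lam q (dadd q t)" if "q \<le> J" for q
  proof -
    have a1: "q \<le> dadd q (dsub (d l) J)" by (auto simp: dadd_def le_fun_def)
    have a2: "dadd q (dsub (d l) J) \<le> d l" unfolding le_fun_def dadd_def dsub_def
    proof
      fix i have "q i \<le> J i" "J i \<le> d l i" using that Jl unfolding le_fun_def by auto
      then show "q i + (d l i - J i) \<le> d l i" by arith
    qed
    have a3: "d mu \<le> dadd (d mu) t" by (auto simp: dadd_def le_fun_def)
    have a4: "dadd (d mu) t \<le> dsub (dadd q (dsub (d l) J)) q" using T by (auto simp: dadd_def dsub_def le_fun_def)
    have b1: "q \<le> dadd q t" by (auto simp: dadd_def le_fun_def)
    have b2: "dadd q t \<le> d lam" unfolding le_fun_def dadd_def dsub_def t_def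
    proof
      fix i have "q i \<le> J i" "J i \<le> d lam i" using that lam(3) unfolding le_fun_def by auto
      then show "q i + (d lam i - J i) \<le> d lam i" by arith
    qed
    have e1: "dadd q (d mu) = dadd (d mu) q" "dadd q (dadd (d mu) t) = dadd (d mu) (dadd q t)"
      by (auto simp: dadd_def)
    show ?thesis
      using seg_seg[OF KG lM(1) a1 a2 a3 a4] seg_cmp[OF KG mu(1) lam(1) _ b1 b2] mu lam e1 l_def by simp
  qed
  show "\<exists>l\<in>Mor. r l = v \<and> djoin m n \<le> d l \<and>
          seg Mor r s cmp d l m (dadd m (dsub (d l) (djoin m n)))
          \<noteq> seg Mor r s cmp d l n (dadd n (dsub (d l) (djoin m n)))"
  proof (intro bexI conjI)
    show "djoin m n \<le> d l" using Jl J_def by simp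
    show "seg Mor r s cmp d l m (dadd m (dsub (d l) (djoin m n)))
          \<noteq> seg Mor r s cmp d l n (dadd n (dsub (d l) (djoin m n)))"
    proof
      assume "seg Mor r s cmp d l m (dadd m (dsub (d l) (djoin m n)))
          = seg Mor r s cmp d l n (dadd n (dsub (d l) (djoin m n)))"
      then have "seg Mor r s cmp d lam m (dadd m t) = seg Mor r s cmp d lam n (dadd n t)"
        using key[OF mJ(1)] key[OF mJ(2)] J_def by metis
      then show False using lam(4) t_def by simp
    qed
  qed (use lM in auto)
qed

end
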